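(* Let $n,k\in\mathbb N$ with $k\ge 2$, and let $b=n^k+1$. Then for every $m\in\{2,3,\dots,n\}$, the number $(m\cdot n)^k$ is antipalindromic in base $b$.
   Context: For an integer $b\ge 2$, every natural number $x$ has a unique base-$b$ expansion $x=a_\ell b^\ell+\dots+a_1b+a_0$ with $a_0,\dots,a_\ell\in\{0,1,\dots,b-1\}$ and $a_\ell\neq 0$. The number $x$ is antipalindromic in base $b$ if $a_j=b-1-a_{\ell-j}$ for all $j\in\{0,1,\dots,\ell\}$. *)

theory Defs
  imports Main
begin

definition is_base_expansion :: "nat \<Rightarrow> nat \<Rightarrow> nat \<Rightarrow> (nat \<Rightarrow> nat) \<Rightarrow> bool" where
  "is_base_expansion b x l a \<longleftrightarrow>
     x = (\<Sum>j\<le>l. a j * b ^ j) \<and> (\<forall>j\<le>l. a j < b) \<and> a l \<noteq> 0"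

definition antipalindromic :: "nat \<Rightarrow> nat \<Rightarrow> bool" where
  "antipalindromic b x \<longleftrightarrow>
     (\<exists>l a. is_base_expansion b x l a \<and> (\<forall>j\<le>l. a j = b - 1 - a (l - j)))"

end

theory Submission
  imports Defs
begin

lemma key:
  fixes M N :: nat
  assumes "1 \<le> M" "M \<le> N"
  shows "M * N = (N + 1 - M) + (M - 1) * (N + 1)"
proof -
  obtain A where A: "M = A + 1" using assms(1) by (metis add.commute le_Suc_ex)
  obtain B where B: "N = M + B" using assms(2) le_Suc_ex by (metis le_add_diff_inverse)
  show ?thesis unfolding B A by (simp add: algebra_simps)
qed

theorem mainTheorem11:
  fixes n k m :: nat
  assumes "k \<ge> 2" and "2 \<le> m" and "m \<le> n"
  shows "antipalindromic (n ^ k + 1) ((m * n) ^ k)"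
proof -
  define M where "M = m ^ k"
  define N where "N = n ^ k"
  have M1: "2 \<le> M" unfolding M_def using assms
  proof -
    have "m ^ 1 \<le> m ^ k" using assms by (intro power_increasing) auto
    then show "2 \<le> m ^ k" using assms by simp
  qed
  have MN: "M \<le> N" unfolding M_def N_def using assms(3) by (simp add: power_mono)
  define a where "a = (\<lambda>j::nat. if j = 0 then N + 1 - M else M - 1)"
  have "is_base_expansion (N + 1) (M * N) 1 a"
    unfolding is_base_expansion_def a_def using M1 MN key[of M N] by auto
  moreover have "\<forall>j\<le>1. a j = (N + 1) - 1 - a (1 - j)"
    unfolding a_def using M1 MN by auto
  ultimately show ?thesis unfolding antipalindromic_def M_def N_def
    by (metis power_mult_distrib)
qed

end
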